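(* Let $w$ be a finite balanced word over $\Sigma=\{a,b\}$. Then for any integer $k>0$, $P(w)\equiv(0,0)\pmod k$ (i.e., both $|w|_a$ and $|w|_b$ are divisible by $k$) if and only if $w$ is an abelian $k$-power.
   Context: $|w|_x$ is the number of occurrences of letter $x$ in $w$, and $P(w)=(|w|_a,|w|_b)$ is the Parikh vector. A word $w$ over $\{a,b\}$ is balanced if for any two factors $u,v$ of $w$ of the same length, $\big||u|_a-|v|_a\big|\leq 1$. An abelian $k$-power is a word of the form $v_1v_2\cdots v_k$ where all $v_i$ have the same Parikh vector. *)

theory Defs
  imports Main
begin

datatype letter = A | B

definition occ :: "letter list \<Rightarrow> letter \<Rightarrow> nat" where
  "occ w x = length (filter (\<lambda>y. y = x) w)"

definition parikh :: "letter list \<Rightarrow> nat \<times> nat" where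
  "parikh w = (occ w A, occ w B)"

definition is_factor :: "letter list \<Rightarrow> letter list \<Rightarrow> bool" where
  "is_factor u w \<longleftrightarrow> (\<exists>x y. w = x @ u @ y)"

definition balanced :: "letter list \<Rightarrow> bool" where
  "balanced w \<longleftrightarrow> (\<forall>u v. is_factor u w \<longrightarrow> is_factor v w \<longrightarrow> length u = length v \<longrightarrow>
      \<bar>int (occ u A) - int (occ v A)\<bar> \<le> 1)"

definition abelian_power :: "nat \<Rightarrow> letter list \<Rightarrow> bool" where
  "abelian_power k w \<longleftrightarrow> (\<exists>vs. length vs = k \<and> concat vs = w \<and>
      (\<forall>i<k. \<forall>j<k. parikh (vs ! i) = parikh (vs ! j)))"

end

theory Submission
  imports Defs
begin

lemma occ_append[simp]: "occ (xs @ ys) x = occ xs x + occ ys x"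
  by (simp add: occ_def)

lemma occ_concat: "occ (concat vs) x = sum_list (map (\<lambda>v. occ v x) vs)"
  by (induction vs) (simp_all add: occ_def)

lemma occ_AB: "occ v A + occ v B = length v"
proof (induction v)
  case Nil then show ?case by (simp add: occ_def)
next
  case (Cons a v) then show ?case by (cases a) (simp_all add: occ_def)
qed

fun chunks :: "nat \<Rightarrow> nat \<Rightarrow> letter list \<Rightarrow> letter list list" where
  "chunks m 0 w = []"
| "chunks m (Suc k) w = take m w # chunks m k (drop m w)"

lemma chunks_length: "length (chunks m k w) = k"
  by (induction k arbitrary: w) auto

lemma chunks_concat: "length w = k * m \<Longrightarrow> concat (chunks m k w) = w"
  by (induction k arbitrary: w) auto

lemma chunks_len_elem: "length w = k * m \<Longrightarrow> v \<in> set (chunks m k w) \<Longrightarrow> length v = m"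
proof (induction k arbitrary: w)
  case 0 then show ?case by simp
next
  case (Suc k)
  have "length (drop m w) = k * m" using Suc.prems by simp
  show ?case
  proof (cases "v = take m w")
    case True then show ?thesis using Suc.prems by simp
  next
    case False
    then have "v \<in> set (chunks m k (drop m w))" using Suc.prems by simp
    then show ?thesis using Suc.IH \<open>length (drop m w) = k * m\<close> by blast
  qed
qed

lemma chunks_factor: "v \<in> set (chunks m k w) \<Longrightarrow> is_factor v w"
proof (induction k arbitrary: w)
  case 0 then show ?case by simp
next
  case (Suc k)
  show ?case
  proof (cases "v = take m w")
    case True
    then show ?thesis unfolding is_factor_def
      by (metis append_Nil append_take_drop_id)
  next
    case False
    then have "v \<in> set (chunks m k (drop m w))" using Suc.prems by simp
    then have "is_factor v (drop m w)" using Suc.IH by blast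
    then obtain x y where "drop m w = x @ v @ y" unfolding is_factor_def by blast
    then have "w = (take m w @ x) @ v @ y" by (metis append.assoc append_take_drop_id)
    then show ?thesis unfolding is_factor_def by blast
  qed
qed

lemma sum_list_const: "(\<forall>x\<in>set xs. x = c) \<Longrightarrow> sum_list xs = length xs * (c::nat)"
  by (induction xs) auto

lemma sum_list_le: "(\<forall>x\<in>set xs. x \<le> c) \<Longrightarrow> sum_list xs \<le> length xs * (c::nat)"
  by (induction xs) auto

lemma sum_list_ge: "(\<forall>x\<in>set xs. c \<le> x) \<Longrightarrow> length xs * (c::nat) \<le> sum_list xs"
  by (induction xs) auto

lemma sum_list_lt: "(\<forall>x\<in>set xs. x \<le> c) \<Longrightarrow> y \<in> set xs \<Longrightarrow> y < c \<Longrightarrow> sum_list xs < length xs * (c::nat)"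
proof (induction xs)
  case Nil then show ?case by simp
next
  case (Cons a xs)
  show ?case
  proof (cases "y = a")
    case True
    then show ?thesis using Cons.prems sum_list_le[of xs c] by auto
  next
    case False
    then show ?thesis using Cons by auto
  qed
qed

lemma sum_list_gt: "(\<forall>x\<in>set xs. c \<le> x) \<Longrightarrow> y \<in> set xs \<Longrightarrow> c < y \<Longrightarrow> length xs * (c::nat) < sum_list xs"
proof (induction xs)
  case Nil then show ?case by simp
next
  case (Cons a xs)
  show ?case
  proof (cases "y = a")
    case True
    then show ?thesis using Cons.prems sum_list_ge[of xs c] by auto
  next
    case False
    then show ?thesis using Cons by auto
  qed
qed

lemma all_eq:
  fixes xs :: "nat list"
  assumes "\<forall>x\<in>set xs. \<forall>y\<in>set xs. x \<le> y + 1" and "sum_list xs = length xs * q"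
    and "z \<in> set xs"
  shows "z = q"
proof (rule ccontr)
  assume "z \<noteq> q"
  then consider "z < q" | "z > q" by linarith
  then show False
  proof cases
    case 1
    then have "\<forall>x\<in>set xs. x \<le> q" using assms(1,3) by fastforce
    then show False using sum_list_lt[of xs q z] 1 assms by simp
  next
    case 2
    then have "\<forall>x\<in>set xs. q \<le> x" using assms(1,3) by fastforce
    then show False using sum_list_gt[of xs q z] 2 assms by simp
  qed
qed

theorem lemma4:
  fixes w :: "letter list" and k :: nat
  assumes "balanced w" and "k > 0"
  shows "(k dvd occ w A \<and> k dvd occ w B) \<longleftrightarrow> abelian_power k w"
proof
  assume "k dvd occ w A \<and> k dvd occ w B"
  then obtain qa qb where qa: "occ w A = k * qa" and qb: "occ w B = k * qb"
    by (auto elim!: dvdE)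
  define m where "m = qa + qb"
  have len: "length w = k * m" using occ_AB[of w] qa qb by (simp add: m_def algebra_simps)
  define vs where "vs = chunks m k w"
  have lvs: "length vs = k" by (simp add: vs_def chunks_length)
  have cvs: "concat vs = w" by (simp add: vs_def chunks_concat len)
  have lel: "\<And>v. v \<in> set vs \<Longrightarrow> length v = m" using chunks_len_elem len vs_def by blast
  have fac: "\<And>v. v \<in> set vs \<Longrightarrow> is_factor v w" using chunks_factor vs_def by blast
  define xs where "xs = map (\<lambda>v. occ v A) vs"
  have H1: "\<forall>x\<in>set xs. \<forall>y\<in>set xs. x \<le> y + 1"
  proof (intro ballI)
    fix x y assume "x \<in> set xs" "y \<in> set xs"
    then obtain u v where "u \<in> set vs" "v \<in> set vs" "x = occ u A" "y = occ v A"
      unfolding xs_def by auto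
    moreover have "\<bar>int (occ u A) - int (occ v A)\<bar> \<le> 1"
      using assms(1) calculation fac lel unfolding balanced_def by metis
    ultimately show "x \<le> y + 1" by linarith
  qed
  moreover have H2: "sum_list xs = length xs * qa"
    using occ_concat[of vs A] cvs qa lvs by (simp add: xs_def)
  ultimately have eqA: "\<And>v. v \<in> set vs \<Longrightarrow> occ v A = qa"
  proof -
    fix v assume "v \<in> set vs"
    then have "occ v A \<in> set xs" unfolding xs_def by simp
    then show "occ v A = qa" using all_eq H1 H2 by blast
  qed
  have par: "\<And>v. v \<in> set vs \<Longrightarrow> parikh v = (qa, qb)"
    using eqA lel occ_AB unfolding parikh_def m_def by (metis add_left_cancel)
  show "abelian_power k w" unfolding abelian_power_def
    using lvs cvs par by (metis nth_mem)
next
  assume "abelian_power k w"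
  then obtain vs where lvs: "length vs = k" and cvs: "concat vs = w"
    and p: "\<forall>i<k. \<forall>j<k. parikh (vs ! i) = parikh (vs ! j)"
    unfolding abelian_power_def by blast
  have "\<And>v. v \<in> set vs \<Longrightarrow> parikh v = parikh (vs ! 0)"
    using p lvs assms(2) by (metis in_set_conv_nth)
  then have e: "\<And>v x. v \<in> set vs \<Longrightarrow> occ v x = occ (vs ! 0) x"
    by (metis letter.exhaust parikh_def prod.inject)
  have "\<And>x. occ w x = k * occ (vs ! 0) x"
  proof -
    fix x
    have "occ w x = sum_list (map (\<lambda>v. occ v x) vs)" using occ_concat cvs by metis
    also have "\<dots> = k * occ (vs ! 0) x"
      using sum_list_const[of "map (\<lambda>v. occ v x) vs" "occ (vs ! 0) x"] e lvs by simp
    finally show "occ w x = k * occ (vs ! 0) x" .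
  qed
  then show "k dvd occ w A \<and> k dvd occ w B" by simp
qed

end
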